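(* Let $\Gamma_1,\Gamma_2\subset SO(6)$ be the diagonal groups $\Gamma_1=\{(1,1,1,1,1,1),(-1,-1,-1,-1,-1,-1),(-1,-1,1,1,1,1),(-1,1,-1,1,1,1),(1,-1,-1,1,1,1),(-1,1,1,-1,-1,-1),(1,-1,1,-1,-1,-1),(1,1,-1,-1,-1,-1)\}$, $\Gamma_2=\{(1,1,1,1,1,1),(-1,-1,-1,-1,-1,-1),(-1,-1,1,1,1,1),(1,1,-1,-1,1,1),(1,1,1,1,-1,-1),(-1,-1,-1,-1,1,1),(-1,-1,1,1,-1,-1),(1,1,-1,-1,-1,-1)\}$ (entries listed on the diagonal). Let $H\cong SO(3)$ be the subgroup of $SO(6)$ of block matrices $\mathrm{diag}(A,I_3)$, $A\in SO(3)$, and let $M=SO(6)/H$ (the Stiefel manifold of orthonormal 3-frames in $\mathbb R^6$) carry the homogeneous metric induced from a biinvariant metric on $SO(6)$. Then $\mathcal O_1:=\Gamma_1\backslash M$ and $\mathcal O_2:=\Gamma_2\backslash M$ are isospectral, $\mathcal O_1$ has maximal isotropy order $4$, and $\mathcal O_2$ has maximal isotropy order $2$.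
   Context: $\Gamma_i$ acts on $M=G/H$ by left multiplication. For a good orbifold $\Gamma\backslash M$ the isotropy order of $p(\tilde x)$ is the order of the stabilizer $\Gamma_{\tilde x}$; the spectrum (on functions) consists of Laplace eigenvalues $\lambda$ of $M$ with multiplicities $\dim E_\lambda(M)^\Gamma$; isospectral means equal spectra with multiplicities. *)

theory Defs
  imports "HOL-Analysis.Analysis" "HOL-Library.Numeral_Type" "HOL-Library.Function_Algebras"
begin

text \<open>The coset gH
(H = diag(SO(3), I_3), the stabiliser of e4, e5, e6) corresponds to the frame
formed by the last three columns of g, so left multiplication of SO(6) on G/H
becomes left matrix multiplication on frames.\<close>

definition stiefel :: "(real^3^6) set" where
  "stiefel = {x. transpose x ** x = mat 1}"

definition diag6 :: "real list \<Rightarrow> real^6^6" where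
  "diag6 ds = (\<chi> i j. if i = j then ds ! nat (Rep_bit0 i) else 0)"

definition Gamma1 :: "(real^6^6) set" where
  "Gamma1 = diag6 ` {[1,1,1,1,1,1], [-1,-1,-1,-1,-1,-1], [-1,-1,1,1,1,1],
     [-1,1,-1,1,1,1], [1,-1,-1,1,1,1], [-1,1,1,-1,-1,-1], [1,-1,1,-1,-1,-1],
     [1,1,-1,-1,-1,-1]}"

definition Gamma2 :: "(real^6^6) set" where
  "Gamma2 = diag6 ` {[1,1,1,1,1,1], [-1,-1,-1,-1,-1,-1], [-1,-1,1,1,1,1],
     [1,1,-1,-1,1,1], [1,1,1,1,-1,-1], [-1,-1,-1,-1,1,1], [-1,-1,1,1,-1,-1],
     [1,1,-1,-1,-1,-1]}"

fun Ck :: "nat \<Rightarrow> ('a::real_normed_vector \<Rightarrow> real) \<Rightarrow> bool" where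
  "Ck 0 F = continuous_on UNIV F"
| "Ck (Suc n) F = (F differentiable_on UNIV \<and>
                    (\<forall>v. Ck n (\<lambda>x. frechet_derivative F (at x) v)))"

definition smooth :: "('a::real_normed_vector \<Rightarrow> real) \<Rightarrow> bool" where
  "smooth F = (\<forall>n. Ck n F)"

text \<open>C^\<infinity>(M): restrictions to the closed submanifold M of smooth functions on
the ambient space R^(6x3); functions are normalised to vanish off M.\<close>

definition smooth_fun_M :: "(real^3^6 \<Rightarrow> real) set" where
  "smooth_fun_M = {f. (\<forall>x. x \<notin> stiefel \<longrightarrow> f x = 0) \<and>
                      (\<exists>F. smooth F \<and> (\<forall>x\<in>stiefel. f x = F x))}"

text \<open>Biinvariant metric on so(6): \<langle>X,Y\<rangle> = -1/2 tr(XY); the matrices E_jk - E_kj (j<k)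
form an orthonormal basis, and exp(t(E_kj - E_jk)) is the rotation below. For
the normal homogeneous metric on M = G/H the Laplace-Beltrami operator is minus
the Casimir operator of this basis (acting on the lifted H-invariant function).\<close>

definition rot :: "6 \<Rightarrow> 6 \<Rightarrow> real \<Rightarrow> real^6^6" where
  "rot j k t = (\<chi> a b.
      if (a = j \<and> b = j) \<or> (a = k \<and> b = k) then cos t
      else if a = j \<and> b = k then - sin t
      else if a = k \<and> b = j then sin t
      else if a = b then 1 else 0)"

definition laplacian :: "(real^3^6 \<Rightarrow> real) \<Rightarrow> real^3^6 \<Rightarrow> real" where
  "laplacian f x = - (\<Sum>(j,k)\<in>{(j,k). j < k}.
       deriv (deriv (\<lambda>t. f (rot j k t ** x))) 0)"

definition eigenspace_M :: "real \<Rightarrow> (real^3^6 \<Rightarrow> real) set" where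
  "eigenspace_M lam = {f \<in> smooth_fun_M. \<forall>x\<in>stiefel. laplacian f x = lam * f x}"

definition invariant_under :: "(real^6^6) set \<Rightarrow> (real^3^6 \<Rightarrow> real) set" where
  "invariant_under \<Gamma> = {f. \<forall>\<gamma>\<in>\<Gamma>. \<forall>x\<in>stiefel. f (\<gamma> ** x) = f x}"

definition multiplicity_orb :: "(real^6^6) set \<Rightarrow> real \<Rightarrow> nat" where
  "multiplicity_orb \<Gamma> lam =
     vector_space.dim (\<lambda>c (f :: real^3^6 \<Rightarrow> real) x. c * f x)
       (eigenspace_M lam \<inter> invariant_under \<Gamma>)"

definition isospectral_orb :: "(real^6^6) set \<Rightarrow> (real^6^6) set \<Rightarrow> bool" where
  "isospectral_orb \<Gamma>1 \<Gamma>2 = (\<forall>lam. multiplicity_orb \<Gamma>1 lam = multiplicity_orb \<Gamma>2 lam)"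

definition isotropy_order :: "(real^6^6) set \<Rightarrow> real^3^6 \<Rightarrow> nat" where
  "isotropy_order \<Gamma> x = card {\<gamma>\<in>\<Gamma>. \<gamma> ** x = x}"

definition max_isotropy_order :: "(real^6^6) set \<Rightarrow> nat" where
  "max_isotropy_order \<Gamma> = Max (isotropy_order \<Gamma> ` stiefel)"

end

theory Submission
  imports Defs
begin


lemma diffonD: "F differentiable_on UNIV \<Longrightarrow> (F has_derivative frechet_derivative F (at x)) (at x)"
  by (simp add: differentiable_on_def frechet_derivative_works)

lemma Ck_add: "Ck n F \<Longrightarrow> Ck n G \<Longrightarrow> Ck n (\<lambda>x. F x + G x)"
proof (induction n arbitrary: F G)
  case 0 then show ?case by (auto intro: continuous_intros)
next
  case (Suc n)
  have dF: "F differentiable_on UNIV" and dG: "G differentiable_on UNIV"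
    using Suc.prems by auto
  have fd: "frechet_derivative (\<lambda>x. F x + G x) (at x) v =
      frechet_derivative F (at x) v + frechet_derivative G (at x) v" for x v
  proof -
    have "((\<lambda>x. F x + G x) has_derivative (\<lambda>v. frechet_derivative F (at x) v + frechet_derivative G (at x) v)) (at x)"
      by (intro has_derivative_add diffonD dF dG)
    from frechet_derivative_at[OF this] show ?thesis by metis
  qed
  have "Ck n (\<lambda>x. frechet_derivative F (at x) v + frechet_derivative G (at x) v)" for v
    using Suc by auto
  then show ?case using dF dG by (simp add: fd)
qed

lemma Ck_scale: "Ck n F \<Longrightarrow> Ck n (\<lambda>x. c * F x)"
proof (induction n arbitrary: F)
  case 0 then show ?case by (auto intro: continuous_intros)
next
  case (Suc n)
  have dF: "F differentiable_on UNIV" using Suc.prems by auto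
  have fd: "frechet_derivative (\<lambda>x. c * F x) (at x) v = c * frechet_derivative F (at x) v" for x v
  proof -
    have "((\<lambda>x. c * F x) has_derivative (\<lambda>v. c * frechet_derivative F (at x) v)) (at x)"
      by (intro has_derivative_mult_right diffonD dF)
    from frechet_derivative_at[OF this] show ?thesis by metis
  qed
  have "Ck n (\<lambda>x. c * frechet_derivative F (at x) v)" for v
    using Suc by auto
  moreover have "(\<lambda>x. c * F x) differentiable_on UNIV"
    using dF by (simp add: differentiable_on_def)
  ultimately show ?case by (simp add: fd)
qed

lemma Ck_comp: "bounded_linear L \<Longrightarrow> Ck n F \<Longrightarrow> Ck n (\<lambda>x. F (L x))"
proof (induction n arbitrary: F)
  case 0 then show ?case
    using continuous_on_compose2[of UNIV F UNIV L] linear_continuous_on[of L] by auto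
next
  case (Suc n)
  have dF: "F differentiable_on UNIV" using Suc.prems by auto
  have hd: "((\<lambda>x. F (L x)) has_derivative (\<lambda>v. frechet_derivative F (at (L x)) (L v))) (at x)" for x
    using diff_chain_at[OF bounded_linear_imp_has_derivative[OF Suc.prems(1)] diffonD[OF dF]]
    by (simp add: o_def)
  have fd: "frechet_derivative (\<lambda>x. F (L x)) (at x) v = frechet_derivative F (at (L x)) (L v)" for x v
    using frechet_derivative_at[OF hd[of x]] by metis
  have "Ck n (\<lambda>x. frechet_derivative F (at (L x)) (L v))" for v
    using Suc by auto
  moreover have "(\<lambda>x. F (L x)) differentiable_on UNIV"
    using hd by (auto simp: differentiable_on_def differentiable_def)
  ultimately show ?case by (simp add: fd)
qed

lemma smooth_add: "smooth F \<Longrightarrow> smooth G \<Longrightarrow> smooth (\<lambda>x. F x + G x)"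
  by (simp add: smooth_def Ck_add)
lemma smooth_scale: "smooth F \<Longrightarrow> smooth (\<lambda>x. c * F x)"
  by (simp add: smooth_def Ck_scale)
lemma smooth_comp: "bounded_linear L \<Longrightarrow> smooth F \<Longrightarrow> smooth (\<lambda>x. F (L x))"
  by (simp add: smooth_def Ck_comp)

lemma bl_mm: "bounded_linear (\<lambda>x::real^3^6. (g::real^6^6) ** x)"
  apply (rule linear_conv_bounded_linear[THEN iffD1])
  apply (rule linearI)
  apply (simp add: matrix_add_ldistrib)
  apply (simp add: matrix_matrix_mult_def vec_eq_iff sum_distrib_left algebra_simps)
  done


definition C2 :: "(real \<Rightarrow> real) \<Rightarrow> bool" where
  "C2 \<phi> \<longleftrightarrow> (\<forall>t. \<phi> differentiable (at t)) \<and> (\<forall>t. deriv \<phi> differentiable (at t))"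

lemma C2_D: "C2 \<phi> \<Longrightarrow> DERIV \<phi> t :> deriv \<phi> t"
  by (simp add: C2_def DERIV_deriv_iff_real_differentiable)
lemma C2_DD: "C2 \<phi> \<Longrightarrow> DERIV (deriv \<phi>) t :> deriv (deriv \<phi>) t"
  by (simp add: C2_def DERIV_deriv_iff_real_differentiable)

lemma C2_I:
  assumes "\<And>t. DERIV \<phi> t :> \<phi>' t" "\<And>t. DERIV \<phi>' t :> \<phi>'' t"
  shows "C2 \<phi>" "deriv \<phi> = \<phi>'" "deriv (deriv \<phi>) = \<phi>''"
proof -
  show d: "deriv \<phi> = \<phi>'" using assms(1) by (auto intro!: ext DERIV_imp_deriv)
  show "deriv (deriv \<phi>) = \<phi>''" unfolding d using assms(2) by (auto intro!: ext DERIV_imp_deriv)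
  show "C2 \<phi>" unfolding C2_def d using assms
    by (metis DERIV_deriv_iff_real_differentiable DERIV_imp_deriv)
qed

lemma C2_add:
  assumes "C2 \<phi>" "C2 \<psi>"
  shows "C2 (\<lambda>t. \<phi> t + \<psi> t)" "deriv (deriv (\<lambda>t. \<phi> t + \<psi> t)) t = deriv (deriv \<phi>) t + deriv (deriv \<psi>) t"
proof -
  have 1: "\<And>t. DERIV (\<lambda>t. \<phi> t + \<psi> t) t :> deriv \<phi> t + deriv \<psi> t"
    by (intro DERIV_add C2_D assms)
  have 2: "\<And>t. DERIV (\<lambda>t. deriv \<phi> t + deriv \<psi> t) t :> deriv (deriv \<phi>) t + deriv (deriv \<psi>) t"
    by (intro DERIV_add C2_DD assms)
  show "C2 (\<lambda>t. \<phi> t + \<psi> t)" using C2_I(1)[OF 1 2] .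
  show "deriv (deriv (\<lambda>t. \<phi> t + \<psi> t)) t = deriv (deriv \<phi>) t + deriv (deriv \<psi>) t"
    using C2_I(3)[OF 1 2] by simp
qed

lemma C2_scale:
  assumes "C2 \<phi>"
  shows "C2 (\<lambda>t. c * \<phi> t)" "deriv (deriv (\<lambda>t. c * \<phi> t)) t = c * deriv (deriv \<phi>) t"
proof -
  have 1: "\<And>t. DERIV (\<lambda>t. c * \<phi> t) t :> c * deriv \<phi> t"
    by (intro DERIV_cmult C2_D assms)
  have 2: "\<And>t. DERIV (\<lambda>t. c * deriv \<phi> t) t :> c * deriv (deriv \<phi>) t"
    by (intro DERIV_cmult C2_DD assms)
  show "C2 (\<lambda>t. c * \<phi> t)" using C2_I(1)[OF 1 2] .
  show "deriv (deriv (\<lambda>t. c * \<phi> t)) t = c * deriv (deriv \<phi>) t"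
    using C2_I(3)[OF 1 2] by simp
qed

lemma C2_lin:
  assumes "C2 \<phi>"
  shows "C2 (\<lambda>t. \<phi> (c * t))" "deriv (deriv (\<lambda>t. \<phi> (c * t))) t = c * c * deriv (deriv \<phi>) (c * t)"
proof -
  have 1: "\<And>t. DERIV (\<lambda>t. \<phi> (c * t)) t :> deriv \<phi> (c * t) * c"
    by (intro DERIV_chain2[OF C2_D[OF assms]] derivative_eq_intros) auto
  have 2: "\<And>t. DERIV (\<lambda>t. deriv \<phi> (c * t) * c) t :> deriv (deriv \<phi>) (c * t) * c * c"
    by (intro DERIV_cmult_right DERIV_chain2[OF C2_DD[OF assms]] derivative_eq_intros) auto
  show "C2 (\<lambda>t. \<phi> (c * t))" using C2_I(1)[OF 1 2] .
  show "deriv (deriv (\<lambda>t. \<phi> (c * t))) t = c * c * deriv (deriv \<phi>) (c * t)"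
    using C2_I(3)[OF 1 2] by simp
qed

lemma C2_curve:
  fixes F :: "'a::real_normed_vector \<Rightarrow> real"
  assumes "Ck 2 F"
  shows "C2 (\<lambda>t. F (cos t *\<^sub>R A + sin t *\<^sub>R B + C))"
proof -
  define L where "L t = cos t *\<^sub>R A + sin t *\<^sub>R B + C" for t
  define DF where "DF p = frechet_derivative F (at p)" for p
  have dF: "F differentiable_on UNIV" and dG: "\<And>v. (\<lambda>p. DF p v) differentiable_on UNIV"
    using assms by (auto simp: numeral_2_eq_2 DF_def)
  have HL: "(L has_derivative (\<lambda>h. h *\<^sub>R (- sin t *\<^sub>R A + cos t *\<^sub>R B))) (at t)" for t
  proof -
    have "(L has_vector_derivative (- sin t *\<^sub>R A + cos t *\<^sub>R B)) (at t)"
      unfolding L_def by (auto intro!: derivative_eq_intros)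
    then show ?thesis by (simp add: has_vector_derivative_def)
  qed
  have lin: "linear (DF p)" for p
    unfolding DF_def using dF by (simp add: differentiable_on_def linear_frechet_derivative)
  have H1: "DERIV (\<lambda>t. F (L t)) t :> (- sin t * DF (L t) A + cos t * DF (L t) B)" for t
  proof -
    have "((F \<circ> L) has_derivative (DF (L t) \<circ> (\<lambda>h. h *\<^sub>R (- sin t *\<^sub>R A + cos t *\<^sub>R B)))) (at t)"
      by (rule diff_chain_at[OF HL]) (use dF in \<open>simp add: DF_def diffonD\<close>)
    moreover have "(DF (L t) \<circ> (\<lambda>h. h *\<^sub>R (- sin t *\<^sub>R A + cos t *\<^sub>R B))) =
        (*) (- sin t * DF (L t) A + cos t * DF (L t) B)"
      using lin[of "L t"] by (auto simp: fun_eq_iff linear_add linear_scale linear_neg linear_diff algebra_simps)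
    ultimately show ?thesis by (simp add: has_field_derivative_def o_def)
  qed
  have dGL: "(\<lambda>t. DF (L t) v) differentiable (at t)" for v t
  proof -
    have "((\<lambda>p. DF p v) \<circ> L) differentiable (at t)"
      by (rule differentiable_chain_at) (use HL dG in \<open>auto simp: differentiable_def differentiable_on_def\<close>)
    then show ?thesis by (simp add: o_def)
  qed
  have ds: "(\<lambda>x. - sin x) differentiable (at t)" "(\<lambda>x. cos x) differentiable (at t)" for t :: real
    using DERIV_minus[OF DERIV_sin[of t]] DERIV_cos[of t]
    unfolding has_field_derivative_def by (auto intro: differentiableI)
  have "(\<lambda>t. - sin t * DF (L t) A + cos t * DF (L t) B) differentiable (at t)" for t
    by (intro differentiable_add differentiable_mult dGL ds)
  then have H2: "\<exists>d. DERIV (\<lambda>t. - sin t * DF (L t) A + cos t * DF (L t) B) t :> d" for t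
    using DERIV_deriv_iff_real_differentiable by blast
  obtain D2 where "\<And>t. DERIV (\<lambda>t. - sin t * DF (L t) A + cos t * DF (L t) B) t :> D2 t"
    using H2 by metis
  from C2_I(1)[OF H1 this] show ?thesis unfolding L_def .
qed


lemma sum_two: "(j::'a::finite) \<noteq> k \<Longrightarrow> (\<Sum>a\<in>UNIV. (if a = j then P a else if a = k then Q a else (0::real))) = P j + Q k"
proof -
  assume jk: "j \<noteq> k"
  have "(\<Sum>a\<in>UNIV. (if a = j then P a else if a = k then Q a else 0)) =
        (\<Sum>a\<in>UNIV. (if a = j then P a else 0) + (if a = k then Q a else 0))"
    using jk by (intro sum.cong) auto
  also have "\<dots> = P j + Q k" by (simp add: sum.distrib sum.delta sum.delta')
  finally show ?thesis .
qed

lemma rot_rows: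
  assumes "j \<noteq> k"
  shows "(rot j k t ** (x::real^3^6)) $ i = (if i = j then cos t *\<^sub>R x$j - sin t *\<^sub>R x$k
           else if i = k then sin t *\<^sub>R x$j + cos t *\<^sub>R x$k else x$i)"
proof -
  have r: "rot j k t $ i $ a = (if i = j then (if a = j then cos t else if a = k then - sin t else 0)
      else if i = k then (if a = k then cos t else if a = j then sin t else 0)
      else (if a = i then 1 else 0))" for a
    using assms by (auto simp: rot_def)
  show ?thesis
    using assms
    by (auto simp: vec_eq_iff matrix_matrix_mult_def r sum_two sum_two[of k j] if_distrib[of "\<lambda>z. z * _"]
        sum.delta sum.delta' cong: if_cong)
qed


lemma stiefel_iff: "x \<in> stiefel \<longleftrightarrow> (\<forall>p q. (\<Sum>i\<in>UNIV. x$i$p * x$i$q) = (if p = q then 1 else 0))"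
  by (simp add: stiefel_def vec_eq_iff matrix_matrix_mult_def transpose_def mat_def)

lemma sum_split2: "(j::'a::finite) \<noteq> k \<Longrightarrow> sum f UNIV = f j + f k + sum f (UNIV - {j,k})"
proof -
  assume jk: "j \<noteq> k"
  have "sum f UNIV = f j + sum f (UNIV - {j})" by (simp add: sum.remove)
  also have "sum f (UNIV - {j}) = f k + sum f (UNIV - {j} - {k})"
    using jk by (subst sum.remove[of _ k]) auto
  also have "UNIV - {j} - {k} = UNIV - {j,k}" by auto
  finally show ?thesis by (simp add: add.assoc)
qed

lemma rot_stiefel:
  assumes jk: "j \<noteq> k" and x: "x \<in> stiefel"
  shows "rot j k t ** x \<in> stiefel"
proof -
  let ?y = "rot j k t ** x"
  have "(\<Sum>i\<in>UNIV. ?y$i$p * ?y$i$q) = (\<Sum>i\<in>UNIV. x$i$p * x$i$q)" for p q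
  proof -
    have e: "?y$j$p * ?y$j$q + ?y$k$p * ?y$k$q = x$j$p * x$j$q + x$k$p * x$k$q"
    proof -
      have "(cos t * x $ j $ p - sin t * x $ k $ p) * (cos t * x $ j $ q - sin t * x $ k $ q) +
          (sin t * x $ j $ p + cos t * x $ k $ p) * (sin t * x $ j $ q + cos t * x $ k $ q) =
          ((cos t)^2 + (sin t)^2) * (x$j$p * x$j$q + x$k$p * x$k$q)" by algebra
      then show ?thesis using jk by (simp add: rot_rows)
    qed
    have r: "sum (\<lambda>i. ?y$i$p * ?y$i$q) (UNIV - {j,k}) = sum (\<lambda>i. x$i$p * x$i$q) (UNIV - {j,k})"
      using jk by (intro sum.cong) (auto simp: rot_rows)
    show ?thesis
      using e r sum_split2[OF jk, of "\<lambda>i. ?y$i$p * ?y$i$q"] sum_split2[OF jk, of "\<lambda>i. x$i$p * x$i$q"]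
      by simp
  qed
  with x show ?thesis by (simp add: stiefel_iff)
qed

lemma rot_curve:
  assumes jk: "j \<noteq> k"
  shows "rot j k t ** (x::real^3^6) = cos t *\<^sub>R (\<chi> i. if i = j then x$j else if i = k then x$k else 0)
     + sin t *\<^sub>R (\<chi> i. if i = j then - x$k else if i = k then x$j else 0)
     + (\<chi> i. if i = j \<or> i = k then 0 else x$i)"
  using jk by (auto simp: vec_eq_iff rot_rows algebra_simps)

lemma SM_C2:
  assumes f: "f \<in> smooth_fun_M" and x: "x \<in> stiefel" and jk: "j \<noteq> k"
  shows "C2 (\<lambda>t. f (rot j k t ** x))"
proof -
  obtain F where F: "smooth F" "\<And>y. y \<in> stiefel \<Longrightarrow> f y = F y"
    using f by (auto simp: smooth_fun_M_def)
  have "(\<lambda>t. f (rot j k t ** x)) = (\<lambda>t. F (rot j k t ** x))"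
    using F(2) rot_stiefel[OF jk x] by auto
  also have "\<dots> = (\<lambda>t. F (cos t *\<^sub>R (\<chi> i. if i = j then x$j else if i = k then x$k else 0)
     + sin t *\<^sub>R (\<chi> i. if i = j then - x$k else if i = k then x$j else 0)
     + (\<chi> i. if i = j \<or> i = k then 0 else x$i)))"
    by (simp add: rot_curve[OF jk])
  moreover have "C2 (\<lambda>t. F (cos t *\<^sub>R (\<chi> i. if i = j then x$j else if i = k then x$k else 0)
     + sin t *\<^sub>R (\<chi> i. if i = j then - x$k else if i = k then x$j else 0)
     + (\<chi> i. if i = j \<or> i = k then 0 else x$i)))"
    by (rule C2_curve) (use F(1) in \<open>simp add: smooth_def\<close>)
  ultimately show ?thesis by simp
qed


definition sp :: "(6 \<Rightarrow> real) \<Rightarrow> (6 \<Rightarrow> 6) \<Rightarrow> real^6^6" where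
  "sp s \<sigma> = (\<chi> i j. if j = \<sigma> i then s i else 0)"

definition good :: "(6 \<Rightarrow> real) \<Rightarrow> (6 \<Rightarrow> 6) \<Rightarrow> bool" where
  "good s \<sigma> \<longleftrightarrow> bij \<sigma> \<and> (\<forall>i. s i = 1 \<or> s i = -1)"

lemma sp_mult: "sp s \<sigma> ** (x::real^3^6) = (\<chi> i. s i *\<^sub>R x $ \<sigma> i)"
  by (simp add: vec_eq_iff matrix_matrix_mult_def sp_def if_distrib[of "\<lambda>z. z * _"] sum.delta cong: if_cong)

lemma good_sq: "good s \<sigma> \<Longrightarrow> s i * s i = 1"
  unfolding good_def by (metis mult_1 mult_minus1 minus_minus)

lemma sp_stiefel:
  assumes g: "good s \<sigma>"
  shows "sp s \<sigma> ** x \<in> stiefel \<longleftrightarrow> x \<in> stiefel"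
proof -
  have "(\<Sum>i\<in>UNIV. (sp s \<sigma> ** x)$i$p * (sp s \<sigma> ** x)$i$q) = (\<Sum>i\<in>UNIV. x$i$p * x$i$q)" for p q
  proof -
    have "(\<Sum>i\<in>UNIV. (sp s \<sigma> ** x)$i$p * (sp s \<sigma> ** x)$i$q) = (\<Sum>i\<in>UNIV. x$(\<sigma> i)$p * x$(\<sigma> i)$q)"
    proof (intro sum.cong refl)
      fix i
      have "(sp s \<sigma> ** x)$i$p * (sp s \<sigma> ** x)$i$q = (s i * s i) * (x$(\<sigma> i)$p * x$(\<sigma> i)$q)"
        by (simp add: sp_mult algebra_simps)
      then show "(sp s \<sigma> ** x)$i$p * (sp s \<sigma> ** x)$i$q = x$(\<sigma> i)$p * x$(\<sigma> i)$q"
        by (simp add: good_sq[OF g])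
    qed
    also have "\<dots> = (\<Sum>i\<in>UNIV. x$i$p * x$i$q)"
      using g by (intro sum.reindex_bij_betw) (simp add: good_def)
    finally show ?thesis .
  qed
  then show ?thesis by (simp add: stiefel_iff)
qed

lemma sp_rot:
  assumes g: "good s \<sigma>" and ab: "a \<noteq> b"
  shows "sp s \<sigma> ** (rot (\<sigma> a) (\<sigma> b) t ** x) = rot a b (s a * s b * t) ** (sp s \<sigma> ** (x::real^3^6))"
proof -
  have inj: "\<sigma> i = \<sigma> j \<longleftrightarrow> i = j" for i j using g unfolding good_def bij_def inj_def by blast
  have sa: "s a = 1 \<or> s a = -1" and sb: "s b = 1 \<or> s b = -1" using g by (auto simp: good_def)
  have ab': "\<sigma> a \<noteq> \<sigma> b" using ab inj by simp
  show ?thesis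
    using sa sb ab ab'
    by (auto simp: vec_eq_iff sp_mult rot_rows inj algebra_simps)
qed


definition H :: "(real^3^6 \<Rightarrow> real) \<Rightarrow> real^3^6 \<Rightarrow> 6 \<Rightarrow> 6 \<Rightarrow> real" where
  "H h x j k = deriv (deriv (\<lambda>t. h (rot j k t ** x))) 0"

lemma lap_H: "laplacian h x = - (\<Sum>(j,k)\<in>{(j,k). j < k}. H h x j k)"
  by (simp add: laplacian_def H_def)

lemma rot_swap: "rot k j t = rot j k (- t)"
proof -
  have "rot k j t $ a $ b = rot j k (- t) $ a $ b" for a b
    unfolding rot_def vec_lambda_beta
    by (cases "a = j"; cases "a = k"; cases "b = j"; cases "b = k"; simp)
  then show ?thesis by (simp add: vec_eq_iff)
qed

lemma H_sym:
  assumes "h \<in> smooth_fun_M" "x \<in> stiefel" "j \<noteq> k"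
  shows "H h x k j = H h x j k"
proof -
  have c: "C2 (\<lambda>t. h (rot j k t ** x))" by (rule SM_C2[OF assms])
  have "H h x k j = deriv (deriv (\<lambda>t. (\<lambda>t. h (rot j k t ** x)) ((-1) * t))) 0"
    by (simp add: H_def rot_swap[of k j])
  also have "\<dots> = H h x j k"
    using C2_lin(2)[OF c, of "-1" 0] by (simp add: H_def)
  finally show ?thesis .
qed

lemma sym_sum:
  fixes G :: "6 \<Rightarrow> 6 \<Rightarrow> real"
  assumes "\<And>j k. j \<noteq> k \<Longrightarrow> G k j = G j k"
  shows "(\<Sum>(j,k)\<in>{(j,k). j < k}. G j k) = (1/2) * (\<Sum>(j,k)\<in>{(j,k). j \<noteq> k}. G j k)"
proof -
  have U: "{(j,k). j \<noteq> k} = {(j,k). j < k} \<union> {(j::6,k). k < j}" by auto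
  have D: "{(j,k). j < k} \<inter> {(j::6,k). k < j} = {}" by auto
  have S: "{(j::6,k). k < j} = prod.swap ` {(j,k). j < k}" by auto
  have "(\<Sum>(j,k)\<in>{(j,k). k < j}. G j k) = (\<Sum>(j,k)\<in>{(j,k). j < k}. G k j)"
    unfolding S by (subst sum.reindex) (auto simp: o_def intro: inj_onI)
  also have "\<dots> = (\<Sum>(j,k)\<in>{(j,k). j < k}. G j k)"
    by (intro sum.cong refl) (auto simp: assms)
  finally have "(\<Sum>(j,k)\<in>{(j,k). j \<noteq> k}. G j k) = 2 * (\<Sum>(j,k)\<in>{(j,k). j < k}. G j k)"
    unfolding U by (subst sum.union_disjoint) (use D in auto)
  then show ?thesis by simp
qed

lemma lap_sym:
  assumes "h \<in> smooth_fun_M" "x \<in> stiefel"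
  shows "laplacian h x = - (1/2) * (\<Sum>(j,k)\<in>{(j,k). j \<noteq> k}. H h x j k)"
  unfolding lap_H using sym_sum[of "H h x"] H_sym[OF assms] by simp

lemma SM_add:
  assumes "u \<in> smooth_fun_M" "v \<in> smooth_fun_M" shows "(\<lambda>y. u y + v y) \<in> smooth_fun_M"
proof -
  obtain F where F: "smooth F" "\<And>y. y \<in> stiefel \<Longrightarrow> u y = F y" "\<And>y. y \<notin> stiefel \<Longrightarrow> u y = 0"
    using assms(1) by (auto simp: smooth_fun_M_def)
  obtain G where G: "smooth G" "\<And>y. y \<in> stiefel \<Longrightarrow> v y = G y" "\<And>y. y \<notin> stiefel \<Longrightarrow> v y = 0"
    using assms(2) by (auto simp: smooth_fun_M_def)
  show ?thesis unfolding smooth_fun_M_def using F G smooth_add[OF F(1) G(1)]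
    by (auto intro!: exI[of _ "\<lambda>y. F y + G y"])
qed

lemma SM_scale:
  assumes "u \<in> smooth_fun_M" shows "(\<lambda>y. c * u y) \<in> smooth_fun_M"
proof -
  obtain F where F: "smooth F" "\<And>y. y \<in> stiefel \<Longrightarrow> u y = F y" "\<And>y. y \<notin> stiefel \<Longrightarrow> u y = 0"
    using assms(1) by (auto simp: smooth_fun_M_def)
  show ?thesis unfolding smooth_fun_M_def using F smooth_scale[OF F(1), of c]
    by (auto intro!: exI[of _ "\<lambda>y. c * F y"])
qed

lemma SM_comp:
  assumes g: "good s \<sigma>" and u: "u \<in> smooth_fun_M"
  shows "(\<lambda>y. u (sp s \<sigma> ** y)) \<in> smooth_fun_M"
proof -
  obtain F where F: "smooth F" "\<And>y. y \<in> stiefel \<Longrightarrow> u y = F y" "\<And>y. y \<notin> stiefel \<Longrightarrow> u y = 0"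
    using u by (auto simp: smooth_fun_M_def)
  show ?thesis
    unfolding smooth_fun_M_def
    using F sp_stiefel[OF g] smooth_comp[OF bl_mm F(1)]
    by (auto intro!: exI[of _ "\<lambda>y. F (sp s \<sigma> ** y)"])
qed

lemma SM_zero: "(\<lambda>y. 0) \<in> smooth_fun_M"
proof -
  have "Ck n (\<lambda>y::real^3^6. 0::real)" for n
    by (induction n) (simp_all add: frechet_derivative_const)
  then show ?thesis unfolding smooth_fun_M_def smooth_def
    by (auto intro!: exI[of _ "\<lambda>y. 0"])
qed

lemma lap_add:
  assumes u: "u \<in> smooth_fun_M" and v: "v \<in> smooth_fun_M" and x: "x \<in> stiefel"
  shows "laplacian (\<lambda>y. u y + v y) x = laplacian u x + laplacian v x"
proof -
  have "H (\<lambda>y. u y + v y) x j k = H u x j k + H v x j k" if "j < k" for j k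
  proof -
    have jk: "j \<noteq> k" using that by simp
    show ?thesis unfolding H_def
      by (rule C2_add(2)[OF SM_C2[OF u x jk] SM_C2[OF v x jk]])
  qed
  then show ?thesis unfolding lap_H by (simp add: sum.distrib split_def)
qed

lemma lap_scale:
  assumes u: "u \<in> smooth_fun_M" and x: "x \<in> stiefel"
  shows "laplacian (\<lambda>y. c * u y) x = c * laplacian u x"
proof -
  have "H (\<lambda>y. c * u y) x j k = c * H u x j k" if "j < k" for j k
  proof -
    have jk: "j \<noteq> k" using that by simp
    show ?thesis unfolding H_def
      by (rule C2_scale(2)[OF SM_C2[OF u x jk]])
  qed
  then show ?thesis unfolding lap_H by (simp add: sum_distrib_left split_def)
qed

lemma lap_comp:
  assumes g: "good s \<sigma>" and u: "u \<in> smooth_fun_M" and x: "x \<in> stiefel"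
  shows "laplacian (\<lambda>y. u (sp s \<sigma> ** y)) x = laplacian u (sp s \<sigma> ** x)"
proof -
  let ?g = "sp s \<sigma>"
  let ?h = "\<lambda>y. u (?g ** y)"
  have gx: "?g ** x \<in> stiefel" using sp_stiefel[OF g] x by simp
  have bij: "bij \<sigma>" using g by (simp add: good_def)
  have inj: "\<sigma> i = \<sigma> j \<longleftrightarrow> i = j" for i j using bij unfolding bij_def inj_def by blast
  have Hc: "H ?h x (\<sigma> a) (\<sigma> b) = H u (?g ** x) a b" if "a \<noteq> b" for a b
  proof -
    have "H ?h x (\<sigma> a) (\<sigma> b) = deriv (deriv (\<lambda>t. (\<lambda>t. u (rot a b t ** (?g ** x))) (s a * s b * t))) 0"
      unfolding H_def by (simp add: sp_rot[OF g that])
    also have "\<dots> = (s a * s b) * (s a * s b) * H u (?g ** x) a b"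
      using C2_lin(2)[OF SM_C2[OF u gx that], of "s a * s b" 0] by (simp add: H_def)
    also have "(s a * s b) * (s a * s b) = 1"
      using good_sq[OF g, of a] good_sq[OF g, of b] by (simp add: algebra_simps)
    finally show ?thesis by simp
  qed
  have bb: "bij_betw (\<lambda>(a,b). (\<sigma> a, \<sigma> b)) {(a,b). a \<noteq> b} {(j,k). j \<noteq> k}"
  proof (rule bij_betw_imageI)
    show "inj_on (\<lambda>(a,b). (\<sigma> a, \<sigma> b)) {(a,b). a \<noteq> b}"
      by (auto intro!: inj_onI simp: inj)
    show "(\<lambda>(a,b). (\<sigma> a, \<sigma> b)) ` {(a,b). a \<noteq> b} = {(j,k). j \<noteq> k}"
    proof
      show "(\<lambda>(a,b). (\<sigma> a, \<sigma> b)) ` {(a,b). a \<noteq> b} \<subseteq> {(j,k). j \<noteq> k}" by (auto simp: inj)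
      show "{(j,k). j \<noteq> k} \<subseteq> (\<lambda>(a,b). (\<sigma> a, \<sigma> b)) ` {(a,b). a \<noteq> b}"
      proof
        fix p :: "6 \<times> 6" assume "p \<in> {(j,k). j \<noteq> k}"
        then obtain j k where p: "p = (j,k)" "j \<noteq> k" by auto
        obtain a where a: "j = \<sigma> a" using bij by (metis bij_pointE)
        obtain b where b: "k = \<sigma> b" using bij by (metis bij_pointE)
        have "a \<noteq> b" using p a b by auto
        then show "p \<in> (\<lambda>(a,b). (\<sigma> a, \<sigma> b)) ` {(a,b). a \<noteq> b}"
          using p a b by (auto intro!: image_eqI[of _ _ "(a,b)"])
      qed
    qed
  qed
  have "(\<Sum>(j,k)\<in>{(j,k). j \<noteq> k}. H ?h x j k) = (\<Sum>(a,b)\<in>{(a,b). a \<noteq> b}. H ?h x (\<sigma> a) (\<sigma> b))"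
    using sum.reindex_bij_betw[OF bb, of "\<lambda>(j,k). H ?h x j k", symmetric] by (simp add: split_def)
  also have "\<dots> = (\<Sum>(a,b)\<in>{(a,b). a \<noteq> b}. H u (?g ** x) a b)"
    by (intro sum.cong refl) (auto simp: Hc)
  finally show ?thesis
    using lap_sym[OF SM_comp[OF g u] x] lap_sym[OF u gx] by simp
qed


lemma exhaust6: fixes i :: 6 shows "i = 0 \<or> i = 1 \<or> i = 2 \<or> i = 3 \<or> i = 4 \<or> i = 5"
proof (induct i)
  case (of_int z)
  then have "z = 0 \<or> z = 1 \<or> z = 2 \<or> z = 3 \<or> z = 4 \<or> z = 5" by fastforce
  then show ?case by auto
qed

definition mk :: "real^3 \<Rightarrow> real^3 \<Rightarrow> real^3 \<Rightarrow> real^3 \<Rightarrow> real^3 \<Rightarrow> real^3 \<Rightarrow> real^3^6" where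
  "mk a b c d e g = (\<chi> i. if i = 0 then a else if i = 1 then b else if i = 2 then c
      else if i = 3 then d else if i = 4 then e else g)"

lemma mk_nth [simp]:
  "mk a b c d e g $ 0 = a" "mk a b c d e g $ 1 = b" "mk a b c d e g $ 2 = c"
  "mk a b c d e g $ 3 = d" "mk a b c d e g $ 4 = e" "mk a b c d e g $ 5 = g"
  by (simp_all add: mk_def)

lemma vec_mk: "(\<chi> i. h i) = mk (h 0) (h 1) (h 2) (h 3) (h 4) (h 5)"
  unfolding vec_eq_iff using exhaust6 by (auto simp: mk_def)

lemma x_mk: "x = mk (x$0) (x$1) (x$2) (x$3) (x$4) (x$5)"
  unfolding vec_eq_iff using exhaust6 by (auto simp: mk_def)

lemma ex_mk: "\<exists>a b c d e g. x = mk a b c d e g"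
  using x_mk by blast

definition sv :: "real list \<Rightarrow> 6 \<Rightarrow> real" where "sv l i = l ! nat (Rep_bit0 i)"
definition pv :: "nat list \<Rightarrow> 6 \<Rightarrow> 6" where "pv l i = of_nat (l ! nat (Rep_bit0 i))"

lemma Rep6 [simp]:
  "nat (Rep_bit0 (0::6)) = 0" "nat (Rep_bit0 (1::6)) = 1" "nat (Rep_bit0 (2::6)) = 2"
  "nat (Rep_bit0 (3::6)) = 3" "nat (Rep_bit0 (4::6)) = 4" "nat (Rep_bit0 (5::6)) = 5"
  by (simp_all add: bit0.Rep_numeral bit0.Rep_0 bit0.Rep_1)

definition MM :: "real list \<Rightarrow> nat list \<Rightarrow> real^6^6" where "MM sl pl = sp (sv sl) (pv pl)"

lemma MM_mk: "MM sl pl ** mk a b c d e g = (\<chi> i. sv sl i *\<^sub>R mk a b c d e g $ pv pl i)"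
  by (simp add: MM_def sp_mult)

lemma diag6_sp: "diag6 l = sp (sv l) id"
  by (auto simp: diag6_def sp_def sv_def vec_eq_iff)

lemma test: "MM [1,-1,1,1,-1,1] [3,4,2,0,1,5] ** mk a b c d e g = mk d (-e) c a (-b) g"
  by (simp add: MM_mk vec_mk sv_def pv_def)


definition lc :: "(real \<times> real list \<times> nat list) list \<Rightarrow> (real^3^6 \<Rightarrow> real) \<Rightarrow> real^3^6 \<Rightarrow> real" where
  "lc L f x = sum_list (map (\<lambda>(c,sl,pl). c * f (MM sl pl ** x)) L)"

definition LT :: "(real \<times> real list \<times> nat list) list" where
  "LT = [(1/2, [1,1,1,1,1,1], [0,1,2,3,4,5]), (1/2, [1,1,1,1,-1,-1], [0,1,2,3,4,5]),
         (1/4, [1,1,1,1,1,1], [3,4,2,0,1,5]), (1/4, [1,1,1,-1,-1,1], [3,4,2,0,1,5]),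
         (-1/4, [1,1,1,-1,1,-1], [3,4,2,0,1,5]), (-1/4, [1,1,1,1,-1,-1], [3,4,2,0,1,5]),
         (1/4, [1,1,1,1,1,1], [0,1,5,3,4,2]), (-1/4, [1,1,1,-1,-1,1], [0,1,5,3,4,2]),
         (1/4, [1,1,1,-1,1,-1], [0,1,5,3,4,2]), (-1/4, [1,1,1,1,-1,-1], [0,1,5,3,4,2])]"

definition LTp :: "(real \<times> real list \<times> nat list) list" where
  "LTp = [(1/2, [1,1,1,1,1,1], [0,1,2,3,4,5]), (1/2, [-1,1,-1,1,1,1], [0,1,2,3,4,5]),
         (1/4, [1,1,1,1,1,1], [3,4,2,0,1,5]), (-1/4, [-1,1,-1,1,1,1], [3,4,2,0,1,5]),
         (-1/4, [-1,1,1,1,-1,1], [3,4,2,0,1,5]), (1/4, [1,1,-1,1,-1,1], [3,4,2,0,1,5]),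
         (1/4, [1,1,1,1,1,1], [0,1,5,3,4,2]), (-1/4, [-1,1,-1,1,1,1], [0,1,5,3,4,2]),
         (1/4, [-1,1,1,1,-1,1], [0,1,5,3,4,2]), (-1/4, [1,1,-1,1,-1,1], [0,1,5,3,4,2])]"

definition ginv :: "(real^6^6) set \<Rightarrow> (real^3^6 \<Rightarrow> real) \<Rightarrow> bool" where
  "ginv \<Gamma> f \<longleftrightarrow> (\<forall>\<gamma>\<in>\<Gamma>. \<forall>x. f (\<gamma> ** x) = f x)"

lemma diag_mk: "diag6 l ** mk a b c d e g = (\<chi> i. sv l i *\<^sub>R mk a b c d e g $ i)"
  by (simp add: diag6_sp sp_mult)

lemma G1_rules:
  assumes "ginv Gamma1 f"
  shows "f (mk a (-b) c d e g) = f (mk (-a) b c d e g)"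
    "f (mk a b (-c) d e g) = f (mk (-a) b c d e g)"
    "f (mk a b c (-d) e g) = f (mk (-a) b c d (-e) (-g))"
proof -
  have I: "f (diag6 l ** y) = f y" if "l \<in> {[1,1,1,1,1,1], [-1,-1,-1,-1,-1,-1], [-1,-1,1,1,1,1],
     [-1,1,-1,1,1,1], [1,-1,-1,1,1,1], [-1,1,1,-1,-1,-1], [1,-1,1,-1,-1,-1],
     [1,1,-1,-1,-1,-1]}" for l y
    using assms that by (auto simp: ginv_def Gamma1_def)
  show "f (mk a (-b) c d e g) = f (mk (-a) b c d e g)"
    using I[of "[-1,-1,1,1,1,1]" "mk (-a) b c d e g"] by (simp add: diag_mk vec_mk sv_def)
  show "f (mk a b (-c) d e g) = f (mk (-a) b c d e g)"
    using I[of "[-1,1,-1,1,1,1]" "mk (-a) b c d e g"] by (simp add: diag_mk vec_mk sv_def)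
  show "f (mk a b c (-d) e g) = f (mk (-a) b c d (-e) (-g))"
    using I[of "[-1,1,1,-1,-1,-1]" "mk (-a) b c d (-e) (-g)"] by (simp add: diag_mk vec_mk sv_def)
qed

lemma G2_rules:
  assumes "ginv Gamma2 f"
  shows "f (mk a (-b) c d e g) = f (mk (-a) b c d e g)"
    "f (mk a b c (-d) e g) = f (mk a b (-c) d e g)"
    "f (mk a b c d e (-g)) = f (mk a b c d (-e) g)"
proof -
  have I: "f (diag6 l ** y) = f y" if "l \<in> {[1,1,1,1,1,1], [-1,-1,-1,-1,-1,-1], [-1,-1,1,1,1,1],
     [1,1,-1,-1,1,1], [1,1,1,1,-1,-1], [-1,-1,-1,-1,1,1], [-1,-1,1,1,-1,-1],
     [1,1,-1,-1,-1,-1]}" for l y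
    using assms that by (auto simp: ginv_def Gamma2_def)
  show "f (mk a (-b) c d e g) = f (mk (-a) b c d e g)"
    using I[of "[-1,-1,1,1,1,1]" "mk (-a) b c d e g"] by (simp add: diag_mk vec_mk sv_def)
  show "f (mk a b c (-d) e g) = f (mk a b (-c) d e g)"
    using I[of "[1,1,-1,-1,1,1]" "mk a b (-c) d e g"] by (simp add: diag_mk vec_mk sv_def)
  show "f (mk a b c d e (-g)) = f (mk a b c d (-e) g)"
    using I[of "[1,1,1,1,-1,-1]" "mk a b c d (-e) g"] by (simp add: diag_mk vec_mk sv_def)
qed

lemmas evsimps = lc_def LT_def LTp_def MM_mk vec_mk sv_def pv_def diag_mk

lemma T_inv:
  assumes f: "ginv Gamma1 f"
  shows "ginv Gamma2 (lc LT f)"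
  unfolding ginv_def
proof (intro ballI allI)
  fix \<gamma> x assume "\<gamma> \<in> Gamma2"
  then obtain l where l: "\<gamma> = diag6 l" "l \<in> {[1,1,1,1,1,1], [-1,-1,-1,-1,-1,-1], [-1,-1,1,1,1,1],
     [1,1,-1,-1,1,1], [1,1,1,1,-1,-1], [-1,-1,-1,-1,1,1], [-1,-1,1,1,-1,-1],
     [1,1,-1,-1,-1,-1]}" by (auto simp: Gamma2_def)
  obtain a b c d e g where x: "x = mk a b c d e g" using ex_mk by blast
  show "lc LT f (\<gamma> ** x) = lc LT f x"
    using l(2) unfolding l(1) x
    by (auto simp: evsimps G1_rules[OF f] algebra_simps)
qed

lemma Tp_inv:
  assumes f: "ginv Gamma2 f"
  shows "ginv Gamma1 (lc LTp f)"
  unfolding ginv_def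
proof (intro ballI allI)
  fix \<gamma> x assume "\<gamma> \<in> Gamma1"
  then obtain l where l: "\<gamma> = diag6 l" "l \<in> {[1,1,1,1,1,1], [-1,-1,-1,-1,-1,-1], [-1,-1,1,1,1,1],
     [-1,1,-1,1,1,1], [1,-1,-1,1,1,1], [-1,1,1,-1,-1,-1], [1,-1,1,-1,-1,-1],
     [1,1,-1,-1,-1,-1]}" by (auto simp: Gamma1_def)
  obtain a b c d e g where x: "x = mk a b c d e g" using ex_mk by blast
  show "lc LTp f (\<gamma> ** x) = lc LTp f x"
    using l(2) unfolding l(1) x
    by (auto simp: evsimps G2_rules[OF f] algebra_simps)
qed

lemma TpT:
  assumes f: "ginv Gamma1 f"
  shows "lc LTp (lc LT f) x = f x"
proof -
  obtain a b c d e g where x: "x = mk a b c d e g" using ex_mk by blast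
  show ?thesis unfolding x
    by (simp add: evsimps G1_rules[OF f] algebra_simps)
qed

lemma TTp:
  assumes f: "ginv Gamma2 f"
  shows "lc LT (lc LTp f) x = f x"
proof -
  obtain a b c d e g where x: "x = mk a b c d e g" using ex_mk by blast
  show ?thesis unfolding x
    by (simp add: evsimps G2_rules[OF f] algebra_simps)
qed


lemma forall6: "(\<forall>i::6. P i) \<longleftrightarrow> P 0 \<and> P 1 \<and> P 2 \<and> P 3 \<and> P 4 \<and> P 5"
  using exhaust6 by metis

lemma bij_pv:
  assumes "\<forall>i j. pv pl i = pv pl j \<longrightarrow> i = j"
  shows "bij (pv pl)"
proof -
  have "inj (pv pl)" using assms by (auto intro: injI)
  then show ?thesis using finite_UNIV_inj_surj[of "pv pl"] by (simp add: bij_def)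
qed

lemma good_ID: "\<forall>i. sv sl i = 1 \<or> sv sl i = -1 \<Longrightarrow> good (sv sl) (pv [0,1,2,3,4,5])"
  unfolding good_def by (intro conjI bij_pv) (auto simp: forall6 pv_def)
lemma good_P2: "\<forall>i. sv sl i = 1 \<or> sv sl i = -1 \<Longrightarrow> good (sv sl) (pv [3,4,2,0,1,5])"
  unfolding good_def by (intro conjI bij_pv) (auto simp: forall6 pv_def)
lemma good_P3: "\<forall>i. sv sl i = 1 \<or> sv sl i = -1 \<Longrightarrow> good (sv sl) (pv [0,1,5,3,4,2])"
  unfolding good_def by (intro conjI bij_pv) (auto simp: forall6 pv_def)

definition allgood :: "(real \<times> real list \<times> nat list) list \<Rightarrow> bool" where
  "allgood L \<longleftrightarrow> (\<forall>(c,sl,pl)\<in>set L. good (sv sl) (pv pl))"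

lemma good_simps:
  "good (sv sl) (pv [0, Suc 0, 2, 3, 4, 5]) \<longleftrightarrow> (\<forall>i. sv sl i = 1 \<or> sv sl i = -1)"
  "good (sv sl) (pv [3, 4, 2, 0, Suc 0, 5]) \<longleftrightarrow> (\<forall>i. sv sl i = 1 \<or> sv sl i = -1)"
  "good (sv sl) (pv [0, Suc 0, 5, 3, 4, 2]) \<longleftrightarrow> (\<forall>i. sv sl i = 1 \<or> sv sl i = -1)"
  using good_ID[of sl] good_P2[of sl] good_P3[of sl] by (auto simp: good_def)

lemma allgood_LT: "allgood LT"
  unfolding allgood_def LT_def
  by (simp add: good_simps forall6 sv_def)

lemma allgood_LTp: "allgood LTp"
  unfolding allgood_def LTp_def
  by (simp add: good_simps forall6 sv_def)

lemma lc_Nil: "lc [] f = (\<lambda>x. 0)" by (simp add: lc_def fun_eq_iff)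
lemma lc_Cons: "lc ((c,sl,pl)#L) f = (\<lambda>x. c * f (MM sl pl ** x) + lc L f x)"
  by (simp add: lc_def fun_eq_iff)

lemma allgood_Cons: "allgood ((c,sl,pl)#L) \<longleftrightarrow> good (sv sl) (pv pl) \<and> allgood L"
  by (simp add: allgood_def)

lemma lc_SM: "allgood L \<Longrightarrow> f \<in> smooth_fun_M \<Longrightarrow> lc L f \<in> smooth_fun_M"
proof (induction L)
  case Nil then show ?case by (simp add: lc_Nil SM_zero)
next
  case (Cons a L)
  obtain c sl pl where a: "a = (c,sl,pl)" by (cases a) auto
  show ?case using Cons unfolding a lc_Cons allgood_Cons
    by (intro SM_add SM_scale) (auto simp: MM_def intro: SM_comp)
qed

lemma lap_zero: "x \<in> stiefel \<Longrightarrow> laplacian (\<lambda>y. 0) x = 0"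
  using lap_scale[OF SM_zero, of x 0] by simp

lemma lc_lap:
  assumes "allgood L" "f \<in> smooth_fun_M" "x \<in> stiefel"
  shows "laplacian (lc L f) x = lc L (laplacian f) x"
  using assms(1)
proof (induction L)
  case Nil then show ?case using assms by (simp add: lc_Nil lap_zero)
next
  case (Cons a L)
  obtain c sl pl where a: "a = (c,sl,pl)" by (cases a) auto
  have g: "good (sv sl) (pv pl)" and L: "allgood L" using Cons.prems unfolding a allgood_Cons by auto
  have s1: "(\<lambda>y. f (MM sl pl ** y)) \<in> smooth_fun_M" using SM_comp[OF g assms(2)] by (simp add: MM_def)
  have "laplacian (lc (a#L) f) x = laplacian (\<lambda>y. c * f (MM sl pl ** y)) x + laplacian (lc L f) x"
    unfolding a lc_Cons by (rule lap_add[OF SM_scale[OF s1] lc_SM[OF L assms(2)] assms(3)])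
  also have "laplacian (\<lambda>y. c * f (MM sl pl ** y)) x = c * laplacian f (MM sl pl ** x)"
    using lap_scale[OF s1 assms(3), of c] lap_comp[OF g assms(2,3)] by (simp add: MM_def)
  finally show ?case using Cons.IH[OF L] unfolding a lc_Cons by simp
qed

lemma lc_cong:
  assumes "allgood L" "x \<in> stiefel" "\<And>y. y \<in> stiefel \<Longrightarrow> u y = v y"
  shows "lc L u x = lc L v x"
  using assms(1)
proof (induction L)
  case Nil then show ?case by (simp add: lc_Nil)
next
  case (Cons a L)
  obtain c sl pl where a: "a = (c,sl,pl)" by (cases a) auto
  have g: "good (sv sl) (pv pl)" and L: "allgood L" using Cons.prems unfolding a allgood_Cons by auto
  have "MM sl pl ** x \<in> stiefel" using sp_stiefel[OF g] assms(2) by (simp add: MM_def)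
  then show ?case using Cons.IH[OF L] assms(3) unfolding a lc_Cons by simp
qed

lemma lc_scale: "lc L (\<lambda>y. c * u y) = (\<lambda>x. c * lc L u x)"
  by (induction L) (auto simp: lc_Nil lc_Cons algebra_simps)

lemma lc_add: "lc L (\<lambda>y. u y + v y) = (\<lambda>x. lc L u x + lc L v x)"
  by (induction L) (auto simp: lc_Nil lc_Cons algebra_simps)

lemma lc_eigen:
  assumes L: "allgood L" and f: "f \<in> eigenspace_M lam"
  shows "lc L f \<in> eigenspace_M lam"
proof -
  have fs: "f \<in> smooth_fun_M" and fe: "\<And>x. x \<in> stiefel \<Longrightarrow> laplacian f x = lam * f x"
    using f by (auto simp: eigenspace_M_def)
  have "laplacian (lc L f) x = lam * lc L f x" if x: "x \<in> stiefel" for x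
  proof -
    have "laplacian (lc L f) x = lc L (laplacian f) x" by (rule lc_lap[OF L fs x])
    also have "\<dots> = lc L (\<lambda>y. lam * f y) x" by (rule lc_cong[OF L x fe])
    also have "\<dots> = lam * lc L f x" by (simp add: lc_scale)
    finally show ?thesis .
  qed
  then show ?thesis using lc_SM[OF L fs] by (simp add: eigenspace_M_def)
qed

lemma ginv_iff:
  assumes f: "f \<in> smooth_fun_M" and G: "\<forall>\<gamma>\<in>\<Gamma>. \<exists>s. \<gamma> = sp s id \<and> good s id"
  shows "f \<in> invariant_under \<Gamma> \<longleftrightarrow> ginv \<Gamma> f"
proof
  assume "ginv \<Gamma> f" then show "f \<in> invariant_under \<Gamma>" by (simp add: ginv_def invariant_under_def)
next
  assume i: "f \<in> invariant_under \<Gamma>"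
  show "ginv \<Gamma> f" unfolding ginv_def
  proof (intro ballI allI)
    fix \<gamma> x assume "\<gamma> \<in> \<Gamma>"
    then obtain s where s: "\<gamma> = sp s id" "good s id" using G by auto
    show "f (\<gamma> ** x) = f x"
    proof (cases "x \<in> stiefel")
      case True then show ?thesis using i \<open>\<gamma> \<in> \<Gamma>\<close> by (simp add: invariant_under_def)
    next
      case False
      then have "\<gamma> ** x \<notin> stiefel" using sp_stiefel[OF s(2)] s(1) by simp
      then show ?thesis using f False by (simp add: smooth_fun_M_def)
    qed
  qed
qed

lemma good_id: "good (sv l) id \<longleftrightarrow> (\<forall>i. sv l i = 1 \<or> sv l i = -1)"
  by (simp add: good_def)

lemma G1_sp: "\<forall>\<gamma>\<in>Gamma1. \<exists>s. \<gamma> = sp s id \<and> good s id"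
  unfolding Gamma1_def
  by (auto simp: diag6_sp good_id forall6 sv_def)

lemma G2_sp: "\<forall>\<gamma>\<in>Gamma2. \<exists>s. \<gamma> = sp s id \<and> good s id"
  unfolding Gamma2_def
  by (auto simp: diag6_sp good_id forall6 sv_def)


lemma (in vector_space) dim_transfer:
  assumes A: "subspace A" and B: "subspace B" and lin: "Vector_Spaces.linear scale scale T"
    and TA: "T ` A \<subseteq> B" and TB: "T' ` B \<subseteq> A"
    and inv1: "\<forall>a\<in>A. T' (T a) = a" and inv2: "\<forall>b\<in>B. T (T' b) = b"
  shows "dim A = dim B"
proof -
  interpret lin: Vector_Spaces.linear scale scale T by (rule lin)
  obtain BA where BA: "BA \<subseteq> A" "independent BA" "A \<subseteq> span BA" "card BA = dim A"
    by (rule basis_exists)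
  have spA: "span BA = A" using span_subspace[OF BA(1) BA(3) A] .
  have injA: "inj_on T A" by (rule inj_onI) (metis inv1)
  have ind: "independent (T ` BA)"
    using lin.independent_injective_image[OF BA(2)] injA spA by simp
  have TAB: "T ` A = B"
  proof
    show "T ` A \<subseteq> B" by (rule TA)
    show "B \<subseteq> T ` A"
    proof
      fix b assume b: "b \<in> B"
      then have "T' b \<in> A" using TB by auto
      moreover have "T (T' b) = b" using inv2 b by auto
      ultimately show "b \<in> T ` A" by (metis image_eqI)
    qed
  qed
  have sp: "span (T ` BA) = span B"
  proof -
    have sB: "local.span B = B" by (rule local.span_subspace[OF subset_refl span_superset B])
    have "span (T ` BA) = T ` span BA" by (rule lin.span_image)
    also have "\<dots> = B" using spA TAB by simp
    finally show ?thesis using sB by metis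
  qed
  have "dim B = card (T ` BA)" using dim_eq_card[OF sp ind] .
  also have "\<dots> = card BA" using card_image inj_on_subset[OF injA BA(1)] by blast
  finally show ?thesis using BA(4) by simp
qed

abbreviation fs :: "real \<Rightarrow> (real^3^6 \<Rightarrow> real) \<Rightarrow> real^3^6 \<Rightarrow> real" where
  "fs \<equiv> (\<lambda>c f x. c * f x)"

lemma vs_fs: "vector_space fs"
  by unfold_locales (simp_all add: fun_eq_iff distrib_left distrib_right)

lemma lin_lc: "Vector_Spaces.linear fs fs (lc L)"
  unfolding Vector_Spaces.linear_iff
proof (intro conjI allI vs_fs)
  fix u v :: "real^3^6 \<Rightarrow> real"
  have e: "u + v = (\<lambda>z. u z + v z)" by (simp add: fun_eq_iff)
  show "lc L (u + v) = lc L u + lc L v" unfolding e lc_add by (simp add: fun_eq_iff)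
next
  fix c u
  show "lc L (fs c u) = fs c (lc L u)" by (simp add: lc_scale)
qed


lemma sub_eig:
  "module.subspace fs (eigenspace_M lam \<inter> invariant_under \<Gamma>)"
proof -
  interpret V: vector_space fs by (rule vs_fs)
  show ?thesis
  proof (rule V.subspaceI)
    show "0 \<in> eigenspace_M lam \<inter> invariant_under \<Gamma>"
      using SM_zero lap_zero by (auto simp: eigenspace_M_def invariant_under_def zero_fun_def)
  next
    fix u v assume u: "u \<in> eigenspace_M lam \<inter> invariant_under \<Gamma>" and v: "v \<in> eigenspace_M lam \<inter> invariant_under \<Gamma>"
    have e: "u + v = (\<lambda>z. u z + v z)" by (simp add: fun_eq_iff)
    show "u + v \<in> eigenspace_M lam \<inter> invariant_under \<Gamma>"
      unfolding e using u v SM_add lap_add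
      by (auto simp: eigenspace_M_def invariant_under_def algebra_simps)
  next
    fix c u assume u: "u \<in> eigenspace_M lam \<inter> invariant_under \<Gamma>"
    show "fs c u \<in> eigenspace_M lam \<inter> invariant_under \<Gamma>"
      using u SM_scale lap_scale
      by (auto simp: eigenspace_M_def invariant_under_def algebra_simps)
  qed
qed

lemma T_maps:
  assumes f: "f \<in> eigenspace_M lam \<inter> invariant_under Gamma1"
  shows "lc LT f \<in> eigenspace_M lam \<inter> invariant_under Gamma2"
proof -
  have fs: "f \<in> smooth_fun_M" using f by (simp add: eigenspace_M_def)
  have g: "ginv Gamma1 f" using f ginv_iff[OF fs G1_sp] by simp
  have e: "lc LT f \<in> eigenspace_M lam" using lc_eigen[OF allgood_LT] f by simp
  then have "lc LT f \<in> smooth_fun_M" by (simp add: eigenspace_M_def)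
  then show ?thesis using e ginv_iff[OF _ G2_sp] T_inv[OF g] by simp
qed

lemma Tp_maps:
  assumes f: "f \<in> eigenspace_M lam \<inter> invariant_under Gamma2"
  shows "lc LTp f \<in> eigenspace_M lam \<inter> invariant_under Gamma1"
proof -
  have fs: "f \<in> smooth_fun_M" using f by (simp add: eigenspace_M_def)
  have g: "ginv Gamma2 f" using f ginv_iff[OF fs G2_sp] by simp
  have e: "lc LTp f \<in> eigenspace_M lam" using lc_eigen[OF allgood_LTp] f by simp
  then have "lc LTp f \<in> smooth_fun_M" by (simp add: eigenspace_M_def)
  then show ?thesis using e ginv_iff[OF _ G1_sp] Tp_inv[OF g] by simp
qed

theorem iso: "isospectral_orb Gamma1 Gamma2"
  unfolding isospectral_orb_def multiplicity_orb_def
proof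
  fix lam
  interpret V: vector_space fs by (rule vs_fs)
  show "V.dim (eigenspace_M lam \<inter> invariant_under Gamma1) = V.dim (eigenspace_M lam \<inter> invariant_under Gamma2)"
  proof (rule V.dim_transfer[OF sub_eig sub_eig lin_lc])
    show "lc LT ` (eigenspace_M lam \<inter> invariant_under Gamma1) \<subseteq> eigenspace_M lam \<inter> invariant_under Gamma2"
      using T_maps by blast
    show "lc LTp ` (eigenspace_M lam \<inter> invariant_under Gamma2) \<subseteq> eigenspace_M lam \<inter> invariant_under Gamma1"
      using Tp_maps by blast
    show "\<forall>a\<in>eigenspace_M lam \<inter> invariant_under Gamma1. lc LTp (lc LT a) = a"
    proof
      fix a assume a: "a \<in> eigenspace_M lam \<inter> invariant_under Gamma1"
      have "ginv Gamma1 a" using a ginv_iff[OF _ G1_sp, of a] by (simp add: eigenspace_M_def)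
      then show "lc LTp (lc LT a) = a" using TpT by (auto simp: fun_eq_iff)
    qed
    show "\<forall>a\<in>eigenspace_M lam \<inter> invariant_under Gamma2. lc LT (lc LTp a) = a"
    proof
      fix a assume a: "a \<in> eigenspace_M lam \<inter> invariant_under Gamma2"
      have "ginv Gamma2 a" using a ginv_iff[OF _ G2_sp, of a] by (simp add: eigenspace_M_def)
      then show "lc LT (lc LTp a) = a" using TTp by (auto simp: fun_eq_iff)
    qed
  qed
qed


lemma two_rows:
  assumes x: "x \<in> stiefel" and rows0: "\<forall>i. x$i = 0 \<or> x$i = u \<or> x$i = v"
  shows False
proof -
  have rows: "x$i = 0 \<or> x$i = u \<or> x$i = v" for i using rows0 by auto
  have "dim {u, v} \<le> card {u,v}" by (rule dim_le_card') simp
  also have "\<dots> \<le> 2" by (simp add: card_insert_le_m1)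
  also have "\<dots> < DIM(real^3)" by simp
  finally have "dim {u, v} < DIM(real^3)" .
  then obtain w :: "real^3" where w: "w \<noteq> 0" "\<And>y. y \<in> span {u,v} \<Longrightarrow> orthogonal w y"
    using orthogonal_to_subspace_exists by blast
  have ou: "w \<bullet> u = 0" and ov: "w \<bullet> v = 0"
    using w(2)[of u] w(2)[of v] by (auto simp: orthogonal_def span_base)
  have xw: "x *v w = 0"
  proof -
    have "(x *v w) $ i = 0" for i
    proof -
      have "(x *v w) $ i = x$i \<bullet> w"
        by (simp add: matrix_vector_mult_def inner_vec_def mult.commute)
      then show ?thesis using rows[of i] ou ov by (auto simp: inner_commute)
    qed
    then show ?thesis by (simp add: vec_eq_iff)
  qed
  have "w = (transpose x ** x) *v w" using x by (simp add: stiefel_def)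
  also have "\<dots> = transpose x *v (x *v w)" by (simp add: matrix_vector_mul_assoc)
  also have "\<dots> = 0" using xw by simp
  finally show False using w(1) by simp
qed

lemma mk_eq: "mk a b c d e g = mk a' b' c' d' e' g' \<longleftrightarrow> a = a' \<and> b = b' \<and> c = c' \<and> d = d' \<and> e = e' \<and> g = g'"
  by (metis mk_nth)

lemma neg_self: "(- a = (a::real^3)) \<longleftrightarrow> a = 0"
  by (auto simp: vec_eq_iff)

lemma forall6': "(\<forall>i::6. P i) \<longleftrightarrow> P 0 \<and> P 1 \<and> P 2 \<and> P 3 \<and> P 4 \<and> P 5"
  using exhaust6 by metis

lemma stiefel_mk4:
  assumes "mk a b c d e g \<in> stiefel"
  shows
    "\<not> (a = 0 \<and> b = 0 \<and> c = 0 \<and> d = 0)"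
    "\<not> (a = 0 \<and> b = 0 \<and> c = 0 \<and> e = 0)"
    "\<not> (a = 0 \<and> b = 0 \<and> c = 0 \<and> g = 0)"
    "\<not> (a = 0 \<and> d = 0 \<and> e = 0 \<and> g = 0)"
    "\<not> (b = 0 \<and> d = 0 \<and> e = 0 \<and> g = 0)"
    "\<not> (c = 0 \<and> d = 0 \<and> e = 0 \<and> g = 0)"
    "\<not> (a = 0 \<and> b = 0 \<and> e = 0 \<and> g = 0)"
    "\<not> (a = 0 \<and> b = 0 \<and> c = 0 \<and> d = 0 \<and> e = 0 \<and> g = 0)"
proof -
  show "\<not> (a = 0 \<and> b = 0 \<and> c = 0 \<and> d = 0)" using two_rows[OF assms, of e g] by (auto simp: forall6')
  show "\<not> (a = 0 \<and> b = 0 \<and> c = 0 \<and> e = 0)" using two_rows[OF assms, of d g] by (auto simp: forall6')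
  show "\<not> (a = 0 \<and> b = 0 \<and> c = 0 \<and> g = 0)" using two_rows[OF assms, of d e] by (auto simp: forall6')
  show "\<not> (a = 0 \<and> d = 0 \<and> e = 0 \<and> g = 0)" using two_rows[OF assms, of b c] by (auto simp: forall6')
  show "\<not> (b = 0 \<and> d = 0 \<and> e = 0 \<and> g = 0)" using two_rows[OF assms, of a c] by (auto simp: forall6')
  show "\<not> (c = 0 \<and> d = 0 \<and> e = 0 \<and> g = 0)" using two_rows[OF assms, of a b] by (auto simp: forall6')
  show "\<not> (a = 0 \<and> b = 0 \<and> e = 0 \<and> g = 0)" using two_rows[OF assms, of c d] by (auto simp: forall6')
  show "\<not> (a = 0 \<and> b = 0 \<and> c = 0 \<and> d = 0 \<and> e = 0 \<and> g = 0)" using two_rows[OF assms, of a b] by (auto simp: forall6')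
qed


lemma diag6_ii: "diag6 l $ i $ i = l ! nat (Rep_bit0 i)"
  by (simp add: diag6_def)

lemma inj_diag6: "inj_on diag6 {l. length l = 6}"
proof (rule inj_onI)
  fix l l' assume l: "l \<in> {l. length l = 6}" and l': "l' \<in> {l. length l = 6}" and e: "diag6 l = diag6 l'"
  have d: "l ! nat (Rep_bit0 i) = l' ! nat (Rep_bit0 i)" for i :: 6
    using diag6_ii[of l i] diag6_ii[of l' i] e by simp
  have "l ! n = l' ! n" if "n < 6" for n
  proof -
    have "n = 0 \<or> n = 1 \<or> n = 2 \<or> n = 3 \<or> n = 4 \<or> n = 5" using that by auto
    then show ?thesis using d[of 0] d[of 1] d[of 2] d[of 3] d[of 4] d[of 5]
      by (simp only: Rep6) auto
  qed
  then show "l = l'" using l l' by (auto intro: nth_equalityI)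
qed

lemma fixset: "{\<gamma>\<in>diag6 ` S. \<gamma> ** x = x} = diag6 ` {l\<in>S. diag6 l ** x = x}"
  by auto

lemma card_fix:
  assumes "S \<subseteq> {l. length l = 6}"
  shows "card {\<gamma>\<in>diag6 ` S. \<gamma> ** x = x} = card {l\<in>S. diag6 l ** x = x}"
  unfolding fixset by (rule card_image) (rule inj_on_subset[OF inj_diag6], use assms in auto)

lemmas fsimps = diag_mk vec_mk sv_def mk_eq neg_self

lemma UNIV6: "(UNIV :: 6 set) = {0,1,2,3,4,5}"
  using exhaust6 by blast
definition x0 :: "real^3^6" where "x0 = mk 0 0 0 (axis 1 1) (axis 2 1) (axis 3 1)"
lemma x0_stiefel: "x0 \<in> stiefel"
proof -
  have "(\<Sum>i\<in>UNIV. x0$i$p * x0$i$q) = (if p = q then 1 else 0)" for p q :: 3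
  proof -
    have "(\<Sum>i\<in>UNIV. x0$i$p * x0$i$q) = (\<Sum>i\<in>{0,1,2,3,4,5::6}. x0$i$p * x0$i$q)"
      by (simp only: UNIV6)
    also have "\<dots> = axis 1 1 $ p * axis 1 1 $ q + axis 2 1 $ p * axis 2 1 $ q + axis 3 1 $ p * axis 3 1 $ q"
      by (simp add: x0_def)
    also have "\<dots> = (if p = q then 1 else 0)"
      using exhaust_3[of p] exhaust_3[of q] by (auto simp: axis_def)
    finally show ?thesis .
  qed
  then show ?thesis by (simp add: stiefel_iff)
qed
lemma fix_mk: "diag6 l ** mk a b c d e g = mk (sv l 0 *\<^sub>R a) (sv l 1 *\<^sub>R b) (sv l 2 *\<^sub>R c) (sv l 3 *\<^sub>R d) (sv l 4 *\<^sub>R e) (sv l 5 *\<^sub>R g)"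
  by (simp add: diag_mk vec_mk)

lemma sep_insert: "{x \<in> insert a A. P x} = (if P a then insert a {x\<in>A. P x} else {x\<in>A. P x})"
  by auto
lemma sep_empty: "{x \<in> {}. P x} = {}" by auto

lemma iso1_x0: "isotropy_order Gamma1 x0 = 4"
proof -
  have "{l \<in> {[1,1,1,1,1,1], [-1,-1,-1,-1,-1,-1], [-1,-1,1,1,1,1],
     [-1,1,-1,1,1,1], [1,-1,-1,1,1,1], [-1,1,1,-1,-1,-1], [1,-1,1,-1,-1,-1],
     [1,1,-1,-1,-1,-1]}. diag6 l ** x0 = x0} = {[1,1,1,1,1,1], [-1,-1,1,1,1,1],
     [-1,1,-1,1,1,1], [1,-1,-1,1,1,1]}"
    unfolding x0_def by (simp only: sep_insert sep_empty) (simp add: fix_mk sv_def mk_eq neg_self axis_eq_0_iff insert_commute)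
  then show ?thesis
    unfolding isotropy_order_def Gamma1_def by (subst card_fix) auto
qed

lemma iso1_le:
  assumes x: "x \<in> stiefel"
  shows "isotropy_order Gamma1 x \<le> 4"
proof -
  obtain a b c d e g where xm: "x = mk a b c d e g" using ex_mk by blast
  have x': "mk a b c d e g \<in> stiefel" using x xm by simp
  note m4 = stiefel_mk4[OF x']
  have b1: "\<not> (diag6 [-1,-1,-1,-1,-1,-1] ** x = x)"
    using m4(8) unfolding xm by (simp add: fix_mk sv_def mk_eq neg_self)
  have b2: "\<not> (diag6 [-1,1,1,-1,-1,-1] ** x = x)"
    using m4(4) unfolding xm by (simp add: fix_mk sv_def mk_eq neg_self)
  have b3: "\<not> (diag6 [1,-1,1,-1,-1,-1] ** x = x)"
    using m4(5) unfolding xm by (simp add: fix_mk sv_def mk_eq neg_self)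
  have b4: "\<not> (diag6 [1,1,-1,-1,-1,-1] ** x = x)"
    using m4(6) unfolding xm by (simp add: fix_mk sv_def mk_eq neg_self)
  have "{l \<in> {[1,1,1,1,1,1], [-1,-1,-1,-1,-1,-1], [-1,-1,1,1,1,1],
     [-1,1,-1,1,1,1], [1,-1,-1,1,1,1], [-1,1,1,-1,-1,-1], [1,-1,1,-1,-1,-1],
     [1,1,-1,-1,-1,-1]}. diag6 l ** x = x} \<subseteq> {[1,1,1,1,1,1], [-1,-1,1,1,1,1],
     [-1,1,-1,1,1,1], [1,-1,-1,1,1,1]}"
    using b1 b2 b3 b4 by blast
  then have "card {l \<in> {[1,1,1,1,1,1], [-1,-1,-1,-1,-1,-1], [-1,-1,1,1,1,1],
     [-1,1,-1,1,1,1], [1,-1,-1,1,1,1], [-1,1,1,-1,-1,-1], [1,-1,1,-1,-1,-1],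
     [1,1,-1,-1,-1,-1]}. diag6 l ** x = x} \<le> card {[1,1,1,1,1,1], [-1,-1,1,1,1,1],
     [-1,1,-1,1,1,1], [1,-1,-1,1,1,1::real]}"
    by (rule card_mono[rotated]) simp
  also have "\<dots> \<le> 4" by (simp add: card_insert_if)
  finally show ?thesis
    unfolding isotropy_order_def Gamma1_def by (subst card_fix) auto
qed

lemma iso2_le:
  assumes x: "x \<in> stiefel"
  shows "isotropy_order Gamma2 x \<le> 2"
proof -
  obtain a b c d e g where xm: "x = mk a b c d e g" using ex_mk by blast
  have x': "mk a b c d e g \<in> stiefel" using x xm by simp
  note m4 = stiefel_mk4[OF x']
  have b1: "\<not> (diag6 [-1,-1,-1,-1,-1,-1] ** x = x)"
    using m4(8) unfolding xm by (simp add: fix_mk sv_def mk_eq neg_self)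
  have b2: "\<not> (diag6 [-1,-1,-1,-1,1,1] ** x = x)"
    using m4(1) unfolding xm by (simp add: fix_mk sv_def mk_eq neg_self)
  have b3: "\<not> (diag6 [-1,-1,1,1,-1,-1] ** x = x)"
    using m4(7) unfolding xm by (simp add: fix_mk sv_def mk_eq neg_self)
  have b4: "\<not> (diag6 [1,1,-1,-1,-1,-1] ** x = x)"
    using m4(6) unfolding xm by (simp add: fix_mk sv_def mk_eq neg_self)
  have f01: "diag6 [-1,-1,1,1,1,1] ** x = x \<longleftrightarrow> a = 0 \<and> b = 0"
    unfolding xm by (simp add: fix_mk sv_def mk_eq neg_self)
  have f23: "diag6 [1,1,-1,-1,1,1] ** x = x \<longleftrightarrow> c = 0 \<and> d = 0"
    unfolding xm by (simp add: fix_mk sv_def mk_eq neg_self)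
  have f45: "diag6 [1,1,1,1,-1,-1] ** x = x \<longleftrightarrow> e = 0 \<and> g = 0"
    unfolding xm by (simp add: fix_mk sv_def mk_eq neg_self)
  let ?S = "{l \<in> {[1,1,1,1,1,1], [-1,-1,-1,-1,-1,-1], [-1,-1,1,1,1,1],
     [1,1,-1,-1,1,1], [1,1,1,1,-1,-1], [-1,-1,-1,-1,1,1], [-1,-1,1,1,-1,-1],
     [1,1,-1,-1,-1,-1]}. diag6 l ** x = x}"
  have "\<exists>p :: real list. ?S \<subseteq> {[1,1,1,1,1,1], p}"
  proof (cases "a = 0 \<and> b = 0")
    case True
    then have n1: "\<not> (c = 0 \<and> d = 0)" "\<not> (e = 0 \<and> g = 0)" using m4(1) m4(7) by auto
    have "?S \<subseteq> {[1,1,1,1,1,1], [-1,-1,1,1,1,1]}"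
      using b1 b2 b3 b4 n1 f23 f45 by blast
    then show ?thesis by blast
  next
    case False
    show ?thesis
    proof (cases "c = 0 \<and> d = 0")
      case True
      then have n1: "\<not> (e = 0 \<and> g = 0)" using m4(6) by auto
      have "?S \<subseteq> {[1,1,1,1,1,1], [1,1,-1,-1,1,1]}"
        using b1 b2 b3 b4 n1 False f01 f45 by blast
      then show ?thesis by blast
    next
      case F2: False
      have "?S \<subseteq> {[1,1,1,1,1,1], [1,1,1,1,-1,-1]}"
        using b1 b2 b3 b4 F2 False f01 f23 by blast
      then show ?thesis by blast
    qed
  qed
  then obtain p :: "real list" where "?S \<subseteq> {[1,1,1,1,1,1], p}" by blast
  then have "card ?S \<le> card {[1,1,1,1,1,1], p}"
    by (rule card_mono[rotated]) simp
  also have "\<dots> \<le> 2" by (simp add: card_insert_if)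
  finally show ?thesis
    unfolding isotropy_order_def Gamma2_def by (subst card_fix) auto
qed

lemma iso2_x0: "isotropy_order Gamma2 x0 = 2"
proof -
  have "{l \<in> {[1,1,1,1,1,1], [-1,-1,-1,-1,-1,-1], [-1,-1,1,1,1,1],
     [1,1,-1,-1,1,1], [1,1,1,1,-1,-1], [-1,-1,-1,-1,1,1], [-1,-1,1,1,-1,-1],
     [1,1,-1,-1,-1,-1]}. diag6 l ** x0 = x0} = {[1,1,1,1,1,1], [-1,-1,1,1,1,1]}"
    unfolding x0_def by (simp only: sep_insert sep_empty) (simp add: fix_mk sv_def mk_eq neg_self axis_eq_0_iff insert_commute)
  then show ?thesis
    unfolding isotropy_order_def Gamma2_def by (subst card_fix) auto
qed

lemma max1: "max_isotropy_order Gamma1 = 4"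
  unfolding max_isotropy_order_def
proof (rule Max_eqI)
  show "finite (isotropy_order Gamma1 ` stiefel)"
    by (rule finite_subset[of _ "{..4}"]) (auto simp: iso1_le)
  show "\<And>y. y \<in> isotropy_order Gamma1 ` stiefel \<Longrightarrow> y \<le> 4" using iso1_le by auto
  show "4 \<in> isotropy_order Gamma1 ` stiefel" using iso1_x0 x0_stiefel by (metis image_eqI)
qed

lemma max2: "max_isotropy_order Gamma2 = 2"
  unfolding max_isotropy_order_def
proof (rule Max_eqI)
  show "finite (isotropy_order Gamma2 ` stiefel)"
    by (rule finite_subset[of _ "{..2}"]) (auto simp: iso2_le)
  show "\<And>y. y \<in> isotropy_order Gamma2 ` stiefel \<Longrightarrow> y \<le> 2" using iso2_le by auto
  show "2 \<in> isotropy_order Gamma2 ` stiefel" using iso2_x0 x0_stiefel by (metis image_eqI)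
qed


theorem mainTheorem4:
  shows "isospectral_orb Gamma1 Gamma2 \<and> max_isotropy_order Gamma1 = 4 \<and>
         max_isotropy_order Gamma2 = 2"
  using iso max1 max2 by blast

end
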